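(* In the Riemann problem setting of the context, assume the initial data generate a left shock and a right shock, i.e. $p_*>p_L$ and $p_*>p_R$. Then for all $K,M\in\{L,R\}$: $$|u_*-u_K|<|[\![u]\!]|,\qquad0<p_*-p_K<\big(\gamma\rho_K|[\![u]\!]|+\rho_Ka_K\big)|[\![u]\!]|,$$ $$|\rho_{*K}-\rho_M|<a_K^{-2}\big(\gamma\rho_K|[\![u]\!]|+\rho_Ka_K\big)|[\![u]\!]|+|[\![\rho]\!]|.$$
   Context: Let $\gamma\in(1,2]$. Consider the one-dimensional Riemann problem for the complete Euler equations with left and right primitive states $V_K=(\rho_K,u_K,p_K)$, $\rho_K,p_K>0$, $K=L,R$, sound speeds $a_K=\sqrt{\gamma p_K/\rho_K}$, and jumps $[\![\rho]\!]=\rho_R-\rho_L$, $[\![u]\!]=u_R-u_L$, $[\![p]\!]=p_R-p_L$. For $K=L,R$ define $f_K(p)=(p-p_K)\big(\frac{A_K}{p+B_K}\big)^{1/2}$ if $p>p_K$ and $f_K(p)=\frac{2a_K}{\gamma-1}\big[(p/p_K)^{\frac{\gamma-1}{2\gamma}}-1\big]$ if $p\le p_K$, with $A_K=\frac2{(\gamma+1)\rho_K}$, $B_K=\frac{\gamma-1}{\gamma+1}p_K$. The star pressure $p_*$ solves $f_L(p_* )+f_R(p_* )+u_R-u_L=0$ and $u_*=u_L-f_L(p_* )=u_R+f_R(p_* )$. The $K$-wave is a rarefaction if $p_*\le p_K$, a shock if $p_*>p_K$. The density on the $K$-side of the contact is $\rho_{*K}=\rho_K(p_*/p_K)^{1/\gamma}$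 for a rarefaction and $\rho_{*K}=\rho_K\frac{p_*/p_K+\frac{\gamma-1}{\gamma+1}}{\frac{\gamma-1}{\gamma+1}p_*/p_K+1}$ for a shock. *)

theory Defs
  imports Complex_Main
begin

datatype side = L | R

definition sound_speed :: "real \<Rightarrow> real \<Rightarrow> real \<Rightarrow> real" where
  "sound_speed \<gamma> \<rho> p = sqrt (\<gamma> * p / \<rho>)"

definition A_coef :: "real \<Rightarrow> real \<Rightarrow> real" where
  "A_coef \<gamma> \<rho> = 2 / ((\<gamma> + 1) * \<rho>)"

definition B_coef :: "real \<Rightarrow> real \<Rightarrow> real" where
  "B_coef \<gamma> pK = (\<gamma> - 1) / (\<gamma> + 1) * pK"

text \<open>Toro's pressure function f_K for the state (rho_K, p_K).\<close>
definition f_wave :: "real \<Rightarrow> real \<Rightarrow> real \<Rightarrow> real \<Rightarrow> real" where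
  "f_wave \<gamma> \<rho>K pK p =
     (if p > pK then (p - pK) * sqrt (A_coef \<gamma> \<rho>K / (p + B_coef \<gamma> pK))
      else 2 * sound_speed \<gamma> \<rho>K pK / (\<gamma> - 1) * ((p / pK) powr ((\<gamma> - 1) / (2 * \<gamma>)) - 1))"

text \<open>Density on the K-side of the contact discontinuity.\<close>
definition rho_star :: "real \<Rightarrow> real \<Rightarrow> real \<Rightarrow> real \<Rightarrow> real" where
  "rho_star \<gamma> \<rho>K pK ps =
     (if ps \<le> pK then \<rho>K * (ps / pK) powr (1 / \<gamma>)
      else \<rho>K * (ps / pK + (\<gamma> - 1) / (\<gamma> + 1)) / ((\<gamma> - 1) / (\<gamma> + 1) * (ps / pK) + 1))"

end

theory Submission
  imports Defs
begin

lemma shock_side: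
  fixes \<gamma> \<rho> pK ps D :: real
  assumes g: "1 < \<gamma>" and r: "\<rho> > 0" and pk: "pK > 0" and sh: "ps > pK"
    and fD: "f_wave \<gamma> \<rho> pK ps < D"
  shows "0 < f_wave \<gamma> \<rho> pK ps"
    and "ps - pK < (\<gamma> * \<rho> * D + \<rho> * sound_speed \<gamma> \<rho> pK) * D"
    and "0 < rho_star \<gamma> \<rho> pK ps - \<rho>"
    and "rho_star \<gamma> \<rho> pK ps - \<rho> < (\<gamma> * \<rho> * D + \<rho> * sound_speed \<gamma> \<rho> pK) * D / (sound_speed \<gamma> \<rho> pK)\<^sup>2"
proof -
  define a where "a = sound_speed \<gamma> \<rho> pK"
  define q where "q = ps - pK"
  define f where "f = f_wave \<gamma> \<rho> pK ps"
  define Q where "Q = (\<gamma> * \<rho> * D + \<rho> * a) * D"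
  have q0: "q > 0" using sh q_def by simp
  have a0: "a > 0" using g r pk by (simp add: a_def sound_speed_def)
  have a2: "a^2 = \<gamma> * pK / \<rho>" using g r pk by (simp add: a_def sound_speed_def)
  have den: "ps + B_coef \<gamma> pK > 0"
  proof -
    have "(\<gamma> - 1) / (\<gamma> + 1) * pK > 0" using g pk by simp
    thus ?thesis using pk sh by (simp add: B_coef_def)
  qed
  have A0: "A_coef \<gamma> \<rho> > 0" using g r by (simp add: A_coef_def)
  have fdef: "f = q * sqrt (A_coef \<gamma> \<rho> / (ps + B_coef \<gamma> pK))"
    using sh by (simp add: f_def q_def f_wave_def)
  show f0: "0 < f_wave \<gamma> \<rho> pK ps" using fdef q0 den A0 f_def by simp
  have D0: "D > 0" using f0 fD by simp
  have f2: "f^2 = q^2 * (A_coef \<gamma> \<rho> / (ps + B_coef \<gamma> pK))"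
    using fdef den A0 by (simp add: power_mult_distrib)
  have "f^2 < D^2" using f0 fD f_def by (simp add: power_strict_mono)
  hence "q^2 * (A_coef \<gamma> \<rho> / (ps + B_coef \<gamma> pK)) < D^2" using f2 by simp
  hence "q^2 * A_coef \<gamma> \<rho> < D^2 * (ps + B_coef \<gamma> pK)" using den by (simp add: field_simps)
  hence "q^2 * (2 / ((\<gamma> + 1) * \<rho>)) < D^2 * (ps + B_coef \<gamma> pK)" by (simp add: A_coef_def)
  hence "q^2 * (2 / ((\<gamma> + 1) * \<rho>)) * ((\<gamma> + 1) * \<rho>) < D^2 * (ps + B_coef \<gamma> pK) * ((\<gamma> + 1) * \<rho>)"
    using g r by (intro mult_strict_right_mono) auto
  hence "q^2 * 2 < D^2 * (ps + B_coef \<gamma> pK) * ((\<gamma> + 1) * \<rho>)"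
    using g r by simp
  moreover have "(ps + B_coef \<gamma> pK) * ((\<gamma> + 1) * \<rho>) = (\<gamma>+1)*\<rho>*q + 2*\<gamma>*\<rho>*pK"
    using g by (simp add: B_coef_def q_def field_simps)
  ultimately have k1: "q^2 * 2 < D^2 * ((\<gamma>+1)*\<rho>*q + 2*\<rho>*(\<gamma>*pK))"
  proof -
    assume h1: "q^2 * 2 < D^2 * (ps + B_coef \<gamma> pK) * ((\<gamma> + 1) * \<rho>)"
      and h2: "(ps + B_coef \<gamma> pK) * ((\<gamma> + 1) * \<rho>) = (\<gamma>+1)*\<rho>*q + 2*\<gamma>*\<rho>*pK"
    have "D^2 * (ps + B_coef \<gamma> pK) * ((\<gamma> + 1) * \<rho>) = D^2 * ((\<gamma>+1)*\<rho>*q + 2*\<rho>*(\<gamma>*pK))"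
    proof -
      have "D^2 * (ps + B_coef \<gamma> pK) * ((\<gamma> + 1) * \<rho>) = D^2 * ((ps + B_coef \<gamma> pK) * ((\<gamma> + 1) * \<rho>))"
        by (rule mult.assoc)
      also have "... = D^2 * ((\<gamma>+1)*\<rho>*q + 2*\<gamma>*\<rho>*pK)" by (simp only: h2)
      also have "... = D^2 * ((\<gamma>+1)*\<rho>*q + 2*\<rho>*(\<gamma>*pK))" by (simp add: mult_ac)
      finally show ?thesis .
    qed
    thus ?thesis using h1 by linarith
  qed
  have gp: "\<gamma> * pK = \<rho> * a^2" using a2 r by simp
  have key: "2*q^2 < D^2 * ((\<gamma>+1)*\<rho>*q + 2*\<rho>^2*a^2)"
    proof -
    have "2*\<rho>*(\<gamma>*pK) = 2*\<rho>^2*a^2" using gp by (simp add: power2_eq_square)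
    hence "(\<gamma>+1)*\<rho>*q + 2*\<rho>*(\<gamma>*pK) = (\<gamma>+1)*\<rho>*q + 2*\<rho>^2*a^2" by simp
    hence "q^2 * 2 < D^2 * ((\<gamma>+1)*\<rho>*q + 2*\<rho>^2*a^2)" using k1 by metis
    thus ?thesis by (simp only: mult.commute)
  qed
  have qQ: "q < Q"
  proof (rule ccontr)
    assume "\<not> q < Q"
    hence qQ: "q \<ge> Q" by simp
    have c: "2*Q \<ge> (\<gamma>+1)*\<rho>*D^2"
    proof -
      have e: "2*Q - (\<gamma>+1)*\<rho>*D^2 = (\<gamma>-1)*(\<rho>*D^2) + 2*(\<rho>*a*D)"
        unfolding Q_def by (simp add: algebra_simps power2_eq_square)
      have "(\<gamma>-1)*(\<rho>*D^2) \<ge> 0" using g r by simp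
      moreover have "\<rho>*a*D \<ge> 0" using r a0 D0 by simp
      ultimately show ?thesis using e by linarith
    qed
    have "(2*q^2 - (\<gamma>+1)*\<rho>*D^2*q) - (2*Q^2 - (\<gamma>+1)*\<rho>*D^2*Q) = (q-Q)*(2*q+2*Q-(\<gamma>+1)*\<rho>*D^2)"
      by (simp add: algebra_simps power2_eq_square)
    moreover have "(q-Q)*(2*q+2*Q-(\<gamma>+1)*\<rho>*D^2) \<ge> 0" using qQ c q0 by simp
    moreover have "2*Q^2 - (\<gamma>+1)*\<rho>*D^2*Q = Q*((\<gamma>-1)*\<rho>*D^2 + 2*\<rho>*a*D)"
      unfolding Q_def by (simp add: algebra_simps power2_eq_square)
    moreover have "Q*((\<gamma>-1)*\<rho>*D^2 + 2*\<rho>*a*D) \<ge> (\<rho>*a*D) * (2*\<rho>*a*D)"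
    proof (rule mult_mono)
      show "\<rho>*a*D \<le> Q" unfolding Q_def using g r D0 by (simp add: algebra_simps)
      show "2*\<rho>*a*D \<le> (\<gamma>-1)*\<rho>*D^2 + 2*\<rho>*a*D" using g r by simp
      show "0 \<le> Q" unfolding Q_def using g r D0 a0 by simp
      show "0 \<le> 2*\<rho>*a*D" using r a0 D0 by simp
    qed
    ultimately have "2*q^2 \<ge> D^2 * ((\<gamma>+1)*\<rho>*q + 2*\<rho>^2*a^2)"
      by (simp add: algebra_simps power2_eq_square)
    thus False using key by simp
  qed
  thus "ps - pK < (\<gamma> * \<rho> * D + \<rho> * sound_speed \<gamma> \<rho> pK) * D"
    by (simp add: Q_def q_def a_def)
  define x where "x = ps / pK"
  define b where "b = (\<gamma> - 1) / (\<gamma> + 1)"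
  have x1: "x > 1" using sh pk by (simp add: x_def)
  have b0: "b > 0" using g by (simp add: b_def)
  have bx: "1 + b * x > 0" using b0 x1 by (simp add: add_pos_pos)
  have rs: "rho_star \<gamma> \<rho> pK ps - \<rho> = \<rho> * (1 - b) * (x - 1) / (b * x + 1)"
    using sh b0 x1 bx unfolding rho_star_def x_def[symmetric] b_def[symmetric]
    by (simp add: field_simps)
  have b1: "b < 1" using g by (simp add: b_def)
  show "0 < rho_star \<gamma> \<rho> pK ps - \<rho>" using rs r b0 b1 x1 by (simp add: add_pos_pos)
  have "\<gamma> * (1 - b) < b * x + 1"
  proof -
    have "\<gamma> * (1 - b) = b + 1" using g by (simp add: b_def field_simps)
    also have "... < b * x + 1" using b0 x1 by simp
    finally show ?thesis .
  qed
  hence "(1 - b) / (b * x + 1) < 1 / \<gamma>" using g b0 x1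
    by (simp add: field_simps add_pos_pos)
  hence "\<rho> * (x - 1) * ((1 - b) / (b * x + 1)) < \<rho> * (x - 1) * (1 / \<gamma>)"
    using r x1 by (intro mult_strict_left_mono) auto
  hence "rho_star \<gamma> \<rho> pK ps - \<rho> < \<rho> * (x - 1) / \<gamma>" using rs by (simp add: mult_ac)
  also have "\<rho> * (x - 1) / \<gamma> = q / a^2" 
  proof -
    have "q / a^2 = q * \<rho> / (\<gamma> * pK)" using a2 by simp
    also have "... = \<rho> * (x - 1) / \<gamma>" using pk g unfolding x_def q_def by (simp add: field_simps)
    finally show ?thesis by simp
  qed
  also have "q / a^2 < Q / a^2" using qQ a0 by (simp add: divide_strict_right_mono)
  finally show "rho_star \<gamma> \<rho> pK ps - \<rho> < (\<gamma> * \<rho> * D + \<rho> * sound_speed \<gamma> \<rho> pK) * D / (sound_speed \<gamma> \<rho> pK)\<^sup>2"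
    by (simp add: Q_def a_def)
qed

theorem lemma3p5:
  fixes \<gamma> :: real and \<rho> u p :: "side \<Rightarrow> real" and ps us :: real
  assumes gamma: "1 < \<gamma>" "\<gamma> \<le> 2"
    and pos: "\<And>K. \<rho> K > 0" "\<And>K. p K > 0"
    and star: "f_wave \<gamma> (\<rho> L) (p L) ps + f_wave \<gamma> (\<rho> R) (p R) ps + u R - u L = 0"
    and ustar: "us = u L - f_wave \<gamma> (\<rho> L) (p L) ps"
    and shocks: "ps > p L" "ps > p R"
  shows "\<forall>K M. \<bar>us - u K\<bar> < \<bar>u R - u L\<bar>
           \<and> 0 < ps - p K
           \<and> ps - p K < (\<gamma> * \<rho> K * \<bar>u R - u L\<bar> + \<rho> K * sound_speed \<gamma> (\<rho> K) (p K)) * \<bar>u R - u L\<bar>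
           \<and> \<bar>rho_star \<gamma> (\<rho> K) (p K) ps - \<rho> M\<bar>
               < (\<gamma> * \<rho> K * \<bar>u R - u L\<bar> + \<rho> K * sound_speed \<gamma> (\<rho> K) (p K)) * \<bar>u R - u L\<bar>
                   / (sound_speed \<gamma> (\<rho> K) (p K))\<^sup>2
                 + \<bar>\<rho> R - \<rho> L\<bar>"
proof (intro allI)
  fix K M
  define fL where "fL = f_wave \<gamma> (\<rho> L) (p L) ps"
  define fR where "fR = f_wave \<gamma> (\<rho> R) (p R) ps"
  have fL0: "fL > 0" using shock_side(1)[OF gamma(1) pos(1) pos(2) shocks(1), where D="fL + 1"] fL_def by simp
  have fR0: "fR > 0" using shock_side(1)[OF gamma(1) pos(1) pos(2) shocks(2), where D="fR + 1"] fR_def by simp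
  define D where "D = \<bar>u R - u L\<bar>"
  have Dsum: "D = fL + fR" using star fL0 fR0 unfolding D_def fL_def[symmetric] fR_def[symmetric] by simp
  have psK: "ps > p K" using shocks by (cases K) auto
  have fK: "f_wave \<gamma> (\<rho> K) (p K) ps < D" using Dsum fL0 fR0 fL_def fR_def by (cases K) auto
  note S = shock_side[OF gamma(1) pos(1) pos(2) psK fK]
  have u1: "\<bar>us - u K\<bar> < D" using Dsum fL0 fR0 ustar star fL_def fR_def by (cases K) auto
  have r2: "\<bar>rho_star \<gamma> (\<rho> K) (p K) ps - \<rho> M\<bar> < (\<gamma> * \<rho> K * D + \<rho> K * sound_speed \<gamma> (\<rho> K) (p K)) * D
                   / (sound_speed \<gamma> (\<rho> K) (p K))\<^sup>2 + \<bar>\<rho> R - \<rho> L\<bar>"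
  proof -
    have "\<bar>\<rho> K - \<rho> M\<bar> \<le> \<bar>\<rho> R - \<rho> L\<bar>" by (cases K; cases M) auto
    thus ?thesis using S(3) S(4) by linarith
  qed
  show "\<bar>us - u K\<bar> < \<bar>u R - u L\<bar>
           \<and> 0 < ps - p K
           \<and> ps - p K < (\<gamma> * \<rho> K * \<bar>u R - u L\<bar> + \<rho> K * sound_speed \<gamma> (\<rho> K) (p K)) * \<bar>u R - u L\<bar>
           \<and> \<bar>rho_star \<gamma> (\<rho> K) (p K) ps - \<rho> M\<bar>
               < (\<gamma> * \<rho> K * \<bar>u R - u L\<bar> + \<rho> K * sound_speed \<gamma> (\<rho> K) (p K)) * \<bar>u R - u L\<bar>
                   / (sound_speed \<gamma> (\<rho> K) (p K))\<^sup>2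
                 + \<bar>\<rho> R - \<rho> L\<bar>"
    using u1 psK S(2) r2 unfolding D_def by simp
qed

end
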